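(* Let $\mathbf{Y}=(\{0,1\}^{\mathbb{Z}},\mathcal{B},\nu,S)$ with $\nu=(\tfrac12(\delta_0+\delta_1))^{\otimes\mathbb{Z}}$ and $S$ the left shift, let $\xi$ be the coordinate process, and let $\tau$ be the cellular automaton $\tau((a_n)_n)=(\tau_0(a_n,a_{n+1}))_n$ with $\tau_0(1,1)=1$ and $\tau_0=0$ otherwise. For every $n\ge0$, $h_\nu(\tau^n\xi,S)\le3\log(2)\,2^{-n/2}$.
   Context: The coordinate process is $\xi_i(a)=a_i$; $\tau^n\xi$ is the process $((\tau^na)_i)_{i\in\mathbb{Z}}$. For a finite-valued process $\eta$, $h_\nu(\eta,S)=\lim_m\frac1mH_\nu(\eta_{[0,m]})$ with $H_\nu$ Shannon entropy. *)

theory Defs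
  imports "HOL-Probability.Probability"
begin

text \<open>Bernoulli(1/2) product measure on {0,1}^Z; the bit 1 is encoded as True.\<close>
definition nu :: "(int \<Rightarrow> bool) measure" where
  "nu = PiM UNIV (\<lambda>_. measure_pmf (bernoulli_pmf (1/2)))"

text \<open>Left shift S (not needed in the entropy formula, recorded for completeness).\<close>
definition shiftS :: "(int \<Rightarrow> bool) \<Rightarrow> (int \<Rightarrow> bool)" where
  "shiftS a = (\<lambda>i. a (i + 1))"

definition tau0 :: "bool \<Rightarrow> bool \<Rightarrow> bool" where
  "tau0 x y = (x \<and> y)"

definition tau :: "(int \<Rightarrow> bool) \<Rightarrow> (int \<Rightarrow> bool)" where
  "tau a = (\<lambda>n. tau0 (a n) (a (n + 1)))"

definition shannon_H :: "'a measure \<Rightarrow> ('a \<Rightarrow> 'b) \<Rightarrow> real" where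
  "shannon_H M X = - (\<Sum>y \<in> X ` space M.
      measure M (X -` {y} \<inter> space M) * ln (measure M (X -` {y} \<inter> space M)))"

definition block :: "nat \<Rightarrow> nat \<Rightarrow> (int \<Rightarrow> bool) \<Rightarrow> bool list" where
  "block n m a = map (\<lambda>i. (tau ^^ n) a (int i)) [0..<m+1]"

end

theory Submission
  imports Defs
begin

definition srv :: "'a measure \<Rightarrow> ('a \<Rightarrow> 'b) \<Rightarrow> bool" where
  "srv M X \<longleftrightarrow> finite (X ` space M) \<and> (\<forall>y. X -` {y} \<inter> space M \<in> sets M)"

lemma H_superset:
  assumes "finite A" "X ` space M \<subseteq> A"
  shows "shannon_H M X = - (\<Sum>y\<in>A. measure M (X -` {y} \<inter> space M) * ln (measure M (X -` {y} \<inter> space M)))"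
  unfolding shannon_H_def
proof (intro arg_cong[where f=uminus] sum.mono_neutral_left[OF assms(1) assms(2)] ballI)
  fix y assume "y \<in> A - X ` space M"
  then have "X -` {y} \<inter> space M = {}" by auto
  then show "measure M (X -` {y} \<inter> space M) * ln (measure M (X -` {y} \<inter> space M)) = 0" by simp
qed

lemma H_nonneg:
  assumes "prob_space M"
  shows "0 \<le> shannon_H M X"
proof -
  interpret prob_space M by fact
  have "measure M (X -` {y} \<inter> space M) * ln (measure M (X -` {y} \<inter> space M)) \<le> 0" for y
  proof (cases "measure M (X -` {y} \<inter> space M) = 0")
    case False
    then have "0 < measure M (X -` {y} \<inter> space M)" using measure_nonneg[of M "X -` {y} \<inter> space M"]
      by linarith
    moreover have "measure M (X -` {y} \<inter> space M) \<le> 1" by simp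
    ultimately show ?thesis by (simp add: mult_nonneg_nonpos)
  qed simp
  then show ?thesis unfolding shannon_H_def by (simp add: sum_nonpos)
qed

lemma H_inj:
  assumes "inj_on f (X ` space M)"
  shows "shannon_H M (\<lambda>w. f (X w)) = shannon_H M X"
proof -
  have img: "(\<lambda>w. f (X w)) ` space M = f ` (X ` space M)" by auto
  have pre: "(\<lambda>w. f (X w)) -` {f y} \<inter> space M = X -` {y} \<inter> space M" if "y \<in> X ` space M" for y
    using assms that by (auto simp: inj_on_def)
  show ?thesis unfolding shannon_H_def img
    by (subst sum.reindex[OF assms]) (simp add: pre)
qed

lemma H_mp:
  assumes T: "T \<in> measurable M M" "distr M M T = M" and X: "srv M X"
  shows "shannon_H M (\<lambda>w. X (T w)) = shannon_H M X"
proof -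
  have fin: "finite (X ` space M)" using X by (simp add: srv_def)
  have sub: "(\<lambda>w. X (T w)) ` space M \<subseteq> X ` space M"
    using measurable_space[OF T(1)] by auto
  have "measure M ((\<lambda>w. X (T w)) -` {y} \<inter> space M) = measure M (X -` {y} \<inter> space M)" for y
  proof -
    have "(\<lambda>w. X (T w)) -` {y} \<inter> space M = T -` (X -` {y} \<inter> space M) \<inter> space M"
      using measurable_space[OF T(1)] by auto
    then have "measure M ((\<lambda>w. X (T w)) -` {y} \<inter> space M) = measure (distr M M T) (X -` {y} \<inter> space M)"
      using X T(1) by (simp add: measure_distr srv_def)
    then show ?thesis using T(2) by simp
  qed
  then show ?thesis
    by (simp add: H_superset[OF fin sub] H_superset[OF fin order_refl])
qed

lemma gibbs_term:
  fixes P a b :: real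
  assumes "0 \<le> P" "P \<le> a" "P \<le> b"
  shows "P * ln a + P * ln b - P * ln P \<le> a * b - P"
proof (cases "P = 0")
  case True then show ?thesis using assms by simp
next
  case False
  then have P: "0 < P" using assms by simp
  then have ab: "0 < a" "0 < b" using assms by auto
  have "ln (a * b / P) \<le> a * b / P - 1" using ab P by (intro ln_le_minus_one) simp
  then have "P * ln (a * b / P) \<le> P * (a * b / P - 1)" using P by (simp add: mult_left_mono)
  moreover have "ln (a * b / P) = ln a + ln b - ln P" using ab P by (simp add: ln_div ln_mult)
  moreover have "P * (a * b / P - 1) = a * b - P" using P by (simp add: field_simps)
  ultimately show ?thesis by (simp add: algebra_simps)
qed

lemma srv_pair:
  assumes "srv M X" "srv M Y"
  shows "srv M (\<lambda>w. (X w, Y w))"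
proof -
  have "(\<lambda>w. (X w, Y w)) ` space M \<subseteq> X ` space M \<times> Y ` space M" by auto
  then have "finite ((\<lambda>w. (X w, Y w)) ` space M)" using assms
    by (meson finite_SigmaI finite_subset srv_def)
  moreover have "(\<lambda>w. (X w, Y w)) -` {z} \<inter> space M \<in> sets M" for z
  proof -
    have "(\<lambda>w. (X w, Y w)) -` {z} \<inter> space M = (X -` {fst z} \<inter> space M) \<inter> (Y -` {snd z} \<inter> space M)"
      by (cases z) auto
    then show ?thesis using assms by (simp add: srv_def sets.Int)
  qed
  ultimately show ?thesis by (simp add: srv_def)
qed

lemma srv_comp:
  assumes "srv M X" "T \<in> measurable M M"
  shows "srv M (\<lambda>w. X (T w))"
proof -
  have "(\<lambda>w. X (T w)) ` space M \<subseteq> X ` space M" using measurable_space[OF assms(2)] by auto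
  then have "finite ((\<lambda>w. X (T w)) ` space M)" using assms(1) finite_subset srv_def by blast
  moreover have "(\<lambda>w. X (T w)) -` {y} \<inter> space M \<in> sets M" for y
  proof -
    have "(\<lambda>w. X (T w)) -` {y} \<inter> space M = T -` (X -` {y} \<inter> space M) \<inter> space M"
      using measurable_space[OF assms(2)] by auto
    then show ?thesis using assms measurable_sets[OF assms(2), of "X -` {y} \<inter> space M"] by (simp add: srv_def)
  qed
  ultimately show ?thesis by (simp add: srv_def)
qed

lemma H_sub:
  assumes PS: "prob_space M" and X: "srv M X" and Y: "srv M Y"
  shows "shannon_H M (\<lambda>w. (X w, Y w)) \<le> shannon_H M X + shannon_H M Y"
proof -
  interpret prob_space M by fact
  define A where "A = X ` space M"
  define B where "B = Y ` space M"
  define px where "px x = measure M (X -` {x} \<inter> space M)" for x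
  define py where "py y = measure M (Y -` {y} \<inter> space M)" for y
  define P where "P x y = measure M ((\<lambda>w. (X w, Y w)) -` {(x,y)} \<inter> space M)" for x y
  have fA: "finite A" and fB: "finite B" using X Y by (auto simp: srv_def A_def B_def)
  have sX: "X -` {x} \<inter> space M \<in> sets M" for x using X by (simp add: srv_def)
  have sY: "Y -` {x} \<inter> space M \<in> sets M" for x using Y by (simp add: srv_def)
  have sXY: "(\<lambda>w. (X w, Y w)) -` {z} \<inter> space M \<in> sets M" for z
    using srv_pair[OF X Y] unfolding srv_def by blast
  have m1: "px x = (\<Sum>y\<in>B. P x y)" for x
  proof -
    have "X -` {x} \<inter> space M = (\<Union>y\<in>B. (\<lambda>w. (X w, Y w)) -` {(x,y)} \<inter> space M)"
      by (auto simp: B_def)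
    then have "px x = measure M (\<Union>y\<in>B. (\<lambda>w. (X w, Y w)) -` {(x,y)} \<inter> space M)"
      by (simp add: px_def)
    also have "\<dots> = (\<Sum>y\<in>B. P x y)" unfolding P_def
      by (intro finite_measure_finite_Union fB) (auto simp: sXY disjoint_family_on_def)
    finally show ?thesis .
  qed
  have m2: "py y = (\<Sum>x\<in>A. P x y)" for y
  proof -
    have "Y -` {y} \<inter> space M = (\<Union>x\<in>A. (\<lambda>w. (X w, Y w)) -` {(x,y)} \<inter> space M)"
      by (auto simp: A_def)
    then have "py y = measure M (\<Union>x\<in>A. (\<lambda>w. (X w, Y w)) -` {(x,y)} \<inter> space M)"
      by (simp add: py_def)
    also have "\<dots> = (\<Sum>x\<in>A. P x y)" unfolding P_def
      by (intro finite_measure_finite_Union fA) (auto simp: sXY disjoint_family_on_def)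
    finally show ?thesis .
  qed
  have tX: "(\<Sum>x\<in>A. px x) = 1"
  proof -
    have "space M = (\<Union>x\<in>A. X -` {x} \<inter> space M)" by (auto simp: A_def)
    then have "1 = measure M (\<Union>x\<in>A. X -` {x} \<inter> space M)" using prob_space by simp
    also have "\<dots> = (\<Sum>x\<in>A. px x)" unfolding px_def
      by (intro finite_measure_finite_Union fA) (auto simp: sX disjoint_family_on_def)
    finally show ?thesis by simp
  qed
  have tY: "(\<Sum>y\<in>B. py y) = 1"
  proof -
    have "space M = (\<Union>x\<in>B. Y -` {x} \<inter> space M)" by (auto simp: B_def)
    then have "1 = measure M (\<Union>x\<in>B. Y -` {x} \<inter> space M)" using prob_space by simp
    also have "\<dots> = (\<Sum>x\<in>B. py x)" unfolding py_def
      by (intro finite_measure_finite_Union fB) (auto simp: sY disjoint_family_on_def)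
    finally show ?thesis by simp
  qed
  have HX: "shannon_H M X = - (\<Sum>x\<in>A. \<Sum>y\<in>B. P x y * ln (px x))"
    unfolding shannon_H_def A_def[symmetric] px_def[symmetric]
    by (simp add: m1 sum_distrib_right)
  have HY: "shannon_H M Y = - (\<Sum>x\<in>A. \<Sum>y\<in>B. P x y * ln (py y))"
    unfolding shannon_H_def B_def[symmetric] py_def[symmetric]
    by (simp add: m2 sum_distrib_right sum.swap[of _ B A])
  have "(\<lambda>w. (X w, Y w)) ` space M \<subseteq> A \<times> B" by (auto simp: A_def B_def)
  then have HXY: "shannon_H M (\<lambda>w. (X w, Y w)) = - (\<Sum>x\<in>A. \<Sum>y\<in>B. P x y * ln (P x y))"
    by (subst H_superset[OF finite_SigmaI[OF fA fB]]) (simp_all add: sum.cartesian_product P_def)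
  have le: "P x y * ln (px x) + P x y * ln (py y) - P x y * ln (P x y) \<le> px x * py y - P x y" for x y
  proof (rule gibbs_term)
    show "0 \<le> P x y" by (simp add: P_def)
    show "P x y \<le> px x" unfolding P_def px_def
      by (intro finite_measure_mono) (auto simp: sX)
    show "P x y \<le> py y" unfolding P_def py_def
      by (intro finite_measure_mono) (auto simp: sY)
  qed
  have "(\<Sum>x\<in>A. \<Sum>y\<in>B. P x y * ln (px x) + P x y * ln (py y) - P x y * ln (P x y))
      \<le> (\<Sum>x\<in>A. \<Sum>y\<in>B. px x * py y - P x y)"
    by (intro sum_mono le)
  also have "\<dots> = 0"
    by (simp add: sum_subtractf m1[symmetric] sum_distrib_left[symmetric] tX tY)
  finally show ?thesis unfolding HX HY HXY
    by (simp add: sum_subtractf sum.distrib)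
qed

lemma fekete_aux:
  fixes G :: "nat \<Rightarrow> real" and p :: nat
  assumes sub: "\<And>a b. a \<ge> 1 \<Longrightarrow> b \<ge> 1 \<Longrightarrow> G (a + b) \<le> G a + G b" and p: "p \<ge> 1"
  shows "q * p + r \<ge> 1 \<Longrightarrow> G (q * p + r) \<le> q * G p + (if r = 0 then 0 else G r)"
proof (induction q)
  case 0 then show ?case by simp
next
  case (Suc q)
  show ?case
  proof (cases "q * p + r = 0")
    case True
    then have "q = 0" "r = 0" using p by auto
    then show ?thesis by simp
  next
    case False
    then have "G (p + (q * p + r)) \<le> G p + G (q * p + r)" using p by (intro sub) linarith+
    also have "\<dots> \<le> G p + (q * G p + (if r = 0 then 0 else G r))"
      using Suc.IH False by simp
    finally show ?thesis by (simp add: algebra_simps)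
  qed
qed

lemma fekete:
  fixes G :: "nat \<Rightarrow> real"
  assumes sub: "\<And>a b. a \<ge> 1 \<Longrightarrow> b \<ge> 1 \<Longrightarrow> G (a + b) \<le> G a + G b"
    and nn: "\<And>k. 0 \<le> G k"
  shows "(\<lambda>k. G k / real k) \<longlonglongrightarrow> (INF k\<in>{1..}. G k / real k)"
proof (rule LIMSEQ_I)
  define L where "L = (INF k\<in>{1..}. G k / real k)"
  have bdd: "bdd_below ((\<lambda>k. G k / real k) ` {1..})"
    by (rule bdd_belowI[of _ 0]) (auto simp: nn)
  have low: "L \<le> G k / real k" if "k \<ge> 1" for k
    unfolding L_def using bdd that by (intro cInf_lower) auto
  fix e :: real assume e: "0 < e"
  have "L < L + e/2" using e by simp
  then obtain p where p: "p \<in> {1..}" "G p / real p < L + e/2"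
    unfolding L_def using bdd by (subst (asm) cInf_less_iff) auto
  have p1: "p \<ge> 1" using p by simp
  define C where "C = (\<Sum>r<p. G r)"
  have C0: "0 \<le> C" unfolding C_def by (intro sum_nonneg nn)
  have Cr: "G r \<le> C" if "r < p" for r
    unfolding C_def using that by (intro member_le_sum nn) auto
  obtain N :: nat where N: "real N > 2 * C / e" using reals_Archimedean2 by blast
  show "\<exists>no. \<forall>k\<ge>no. norm (G k / real k - (INF k\<in>{1..}. G k / real k)) < e"
  proof (intro exI[of _ "N + 1"] allI impI)
    fix k assume k: "N + 1 \<le> k"
    then have k1: "k \<ge> 1" and kpos: "real k > 0" by auto
    define q where "q = k div p"
    define r where "r = k mod p"
    have kqr: "k = q * p + r" by (simp add: q_def r_def)
    have rp: "r < p" using p1 by (simp add: r_def)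
    have "G k \<le> q * G p + (if r = 0 then 0 else G r)"
      using fekete_aux[OF sub p1, of q r] kqr k1 by simp
    also have "\<dots> \<le> q * G p + C" using Cr[OF rp] C0 by simp
    finally have Gk: "G k \<le> q * G p + C" .
    have "real q * real p \<le> real k" using kqr by (simp flip: of_nat_mult)
    then have "real q * G p \<le> real k * (G p / real p)" using p1 nn[of p]
      by (simp add: field_simps mult_left_mono)
    with Gk have "G k \<le> real k * (G p / real p) + C" by simp
    then have "G k / real k \<le> G p / real p + C / real k"
      using kpos by (simp add: field_simps)
    moreover have Ck: "C / real k < e / 2"
    proof -
      have "2 * C / e < real k" using N k by simp
      then have "2 * C < e * real k" using e by (simp add: field_simps)
      then show ?thesis using kpos by (simp add: field_simps)
    qed
    ultimately have "G k / real k < L + e" using p(2) by linarith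
    moreover have "L \<le> G k / real k" using low k1 by simp
    ultimately show "norm (G k / real k - (INF k\<in>{1..}. G k / real k)) < e"
      unfolding L_def[symmetric] by simp
  qed
qed

lemma tau_pow: "(tau ^^ n) a i = (\<forall>j\<le>n. a (i + int j))"
proof (induction n arbitrary: i)
  case 0 then show ?case by simp
next
  case (Suc n)
  have "(tau ^^ Suc n) a i = ((tau ^^ n) a i \<and> (tau ^^ n) a (i + 1))"
    by (simp add: tau_def tau0_def)
  also have "\<dots> = ((\<forall>j\<le>n. a (i + int j)) \<and> (\<forall>j\<le>n. a (i + 1 + int j)))" using Suc by simp
  also have "\<dots> = (\<forall>j\<le>Suc n. a (i + int j))"
  proof safe
    fix j assume A: "\<forall>j\<le>n. a (i + int j)" "\<forall>j\<le>n. a (i + 1 + int j)" and j: "j \<le> Suc n"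
    show "a (i + int j)"
    proof (cases j)
      case 0 then show ?thesis using A(1) by auto
    next
      case (Suc j') then show ?thesis using A(2) j by (auto simp: add.assoc)
    qed
  next
    fix j assume "\<forall>j\<le>Suc n. a (i + int j)" "j \<le> n"
    then show "a (i + 1 + int j)" by (metis add.assoc le_Suc_eq of_nat_Suc add.commute Suc_le_mono)
  qed auto
  finally show ?case .
qed

lemma prob_nu: "prob_space nu"
  unfolding nu_def by (intro prob_space_PiM prob_space_measure_pmf)

lemma space_nu: "space nu = UNIV"
  unfolding nu_def by (simp add: space_PiM)

definition shiftk :: "int \<Rightarrow> (int \<Rightarrow> bool) \<Rightarrow> (int \<Rightarrow> bool)" where
  "shiftk k a = (\<lambda>i. a (i + k))"

lemma shiftk_meas: "shiftk k \<in> measurable nu nu"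
proof -
  have "(\<lambda>a. \<lambda>i\<in>UNIV. a (i + k)) \<in> measurable nu nu"
    unfolding nu_def by (intro measurable_restrict measurable_component_singleton) auto
  moreover have "(\<lambda>a. \<lambda>i\<in>UNIV. a (i + k)) = shiftk k" by (simp add: shiftk_def restrict_def fun_eq_iff)
  ultimately show ?thesis by simp
qed

lemma shiftk_distr: "distr nu nu (shiftk k) = nu"
proof -
  have "distr nu (\<Pi>\<^sub>M i\<in>UNIV. (\<lambda>_. measure_pmf (bernoulli_pmf (1/2))) (i + k)) (\<lambda>\<omega>. \<lambda>n\<in>UNIV. \<omega> (n + k))
      = (\<Pi>\<^sub>M i\<in>UNIV. (\<lambda>_. measure_pmf (bernoulli_pmf (1/2))) (i + k))"
    unfolding nu_def
    by (rule distr_PiM_reindex) (auto intro: prob_space_measure_pmf inj_onI)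
  moreover have "(\<lambda>a. \<lambda>i\<in>UNIV. a (i + k)) = shiftk k" by (simp add: shiftk_def restrict_def fun_eq_iff)
  ultimately show ?thesis by (simp add: nu_def)
qed

lemma coord_sets: "{a. a k} \<in> sets nu"
proof -
  have "(\<lambda>a. a k) -` {True} \<inter> space nu \<in> sets nu"
    unfolding nu_def by (rule measurable_sets[OF measurable_component_singleton]) auto
  moreover have "(\<lambda>a. a k) -` {True} \<inter> space nu = {a. a k}" by (auto simp: space_nu)
  ultimately show ?thesis by simp
qed

lemma c_sets: "{a. (tau ^^ n) a i = b} \<in> sets nu"
proof -
  have T: "{a. (tau ^^ n) a i} \<in> sets nu"
  proof -
    have "{a. (tau ^^ n) a i} = (\<Inter>j\<in>{..n}. {a. a (i + int j)})" by (auto simp: tau_pow)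
    then show ?thesis using coord_sets by (auto intro!: sets.finite_INT)
  qed
  show ?thesis
  proof (cases b)
    case True then show ?thesis using T by simp
  next
    case False
    have "{a. (tau ^^ n) a i = b} = space nu - {a. (tau ^^ n) a i}" using False by (auto simp: space_nu)
    then show ?thesis using T by auto
  qed
qed

lemma srv_block: "srv nu (block n m)"
proof -
  have "block n m ` space nu \<subseteq> {xs. length xs = m + 1}" by (auto simp: block_def)
  then have "finite (block n m ` space nu)" using finite_lists_length_eq[of "UNIV :: bool set"]
    by (auto intro: finite_subset)
  moreover have "block n m -` {y} \<inter> space nu \<in> sets nu" for y
  proof (cases "length y = m + 1")
    case True
    have "block n m -` {y} \<inter> space nu = (\<Inter>i\<in>{..<m+1}. {a. (tau ^^ n) a (int i) = y ! i})"
      using True by (auto simp: block_def space_nu list_eq_iff_nth_eq simp del: upt_Suc)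
    then show ?thesis using c_sets by (auto intro!: sets.finite_INT)
  next
    case False
    then have "block n m -` {y} \<inter> space nu = {}" by (auto simp: block_def)
    then show ?thesis by simp
  qed
  ultimately show ?thesis by (simp add: srv_def)
qed

lemma block_split:
  "block n (p + q + 1) w = block n p w @ block n q (shiftk (int (p + 1)) w)"
proof -
  have "[0..<p + q + 1 + 1] = [0..<p + 1] @ [p + 1..<p + 1 + (q + 1)]"
    by (metis add.assoc add.commute upt_add_eq_append zero_le)
  moreover have "[p + 1..<p + 1 + (q + 1)] = map (\<lambda>i. i + (p + 1)) [0..<q + 1]"
    by (metis add.commute map_add_upt)
  ultimately show ?thesis
    unfolding block_def by (simp add: tau_pow shiftk_def algebra_simps del: upt_Suc)
qed

lemma G_sub:
  "shannon_H nu (block n (p + q + 1)) \<le> shannon_H nu (block n p) + shannon_H nu (block n q)"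
proof -
  define T where "T = shiftk (int (p + 1))"
  define Z where "Z = (\<lambda>w. (block n p w, block n q (T w)))"
  have "inj_on (\<lambda>(u, v). u @ v) (Z ` space nu)"
    by (auto simp: inj_on_def Z_def block_def)
  then have "shannon_H nu (\<lambda>w. (\<lambda>(u, v). u @ v) (Z w)) = shannon_H nu Z"
    by (rule H_inj)
  moreover have "(\<lambda>w. (\<lambda>(u, v). u @ v) (Z w)) = block n (p + q + 1)"
    unfolding Z_def T_def by (rule ext) (simp only: block_split prod.case)
  moreover have "shannon_H nu Z \<le> shannon_H nu (block n p) + shannon_H nu (\<lambda>w. block n q (T w))"
    unfolding Z_def
    by (rule H_sub[OF prob_nu srv_block srv_comp[OF srv_block]]) (simp add: T_def shiftk_meas)
  moreover have "shannon_H nu (\<lambda>w. block n q (T w)) = shannon_H nu (block n q)"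
    unfolding T_def by (rule H_mp[OF shiftk_meas shiftk_distr srv_block])
  ultimately show ?thesis by simp
qed

lemma meas_S: "measure nu {a. \<forall>j\<le>n. a (int j)} = (1/2) ^ (n + 1)"
proof -
  define J where "J = int ` {..n}"
  have S: "{a. \<forall>j\<le>n. a (int j)} =
     prod_emb UNIV (\<lambda>_. measure_pmf (bernoulli_pmf (1/2))) J (Pi\<^sub>E J (\<lambda>_. {True}))"
  proof (intro set_eqI iffI)
    fix a assume "a \<in> {a. \<forall>j\<le>n. a (int j)}"
    then have "\<forall>j\<in>J. a j \<in> {True}" by (auto simp: J_def)
    then have "restrict a J \<in> Pi\<^sub>E J (\<lambda>_. {True})" by (simp only: restrict_PiE_iff)
    then show "a \<in> prod_emb UNIV (\<lambda>_. measure_pmf (bernoulli_pmf (1/2))) J (Pi\<^sub>E J (\<lambda>_. {True}))"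
      by (simp add: prod_emb_def space_PiM)
  next
    fix a assume "a \<in> prod_emb UNIV (\<lambda>_. measure_pmf (bernoulli_pmf (1/2))) J (Pi\<^sub>E J (\<lambda>_. {True}))"
    then have "restrict a J \<in> Pi\<^sub>E J (\<lambda>_. {True})" unfolding prod_emb_def by blast
    then have "\<forall>j\<in>J. a j \<in> {True}" by (simp only: restrict_PiE_iff)
    then show "a \<in> {a. \<forall>j\<le>n. a (int j)}" by (auto simp: J_def)
  qed
  have cJ: "card J = n + 1" unfolding J_def by (simp add: card_image)
  have "emeasure nu {a. \<forall>j\<le>n. a (int j)} = (\<Prod>i\<in>J. emeasure (measure_pmf (bernoulli_pmf (1/2))) {True})"
    unfolding S nu_def
    by (rule emeasure_PiM_emb) (auto simp: J_def intro: prob_space_measure_pmf)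
  also have "\<dots> = (\<Prod>i\<in>J. ennreal (1/2))" by (simp add: emeasure_pmf_single)
  also have "\<dots> = ennreal (1/2) ^ (n + 1)" by (simp only: prod_constant cJ)
  also have "\<dots> = ennreal ((1/2) ^ (n + 1))" by (rule ennreal_power) simp
  finally show ?thesis by (simp add: measure_def)
qed

lemma G1: "shannon_H nu (block n 0) = - ((1/2)^(n+1) * ln ((1/2)^(n+1)) + (1 - (1/2)^(n+1)) * ln (1 - (1/2)^(n+1)))"
proof -
  interpret prob_space nu by (rule prob_nu)
  define c where "c = (\<lambda>a. (tau ^^ n) a 0)"
  have "block n 0 = (\<lambda>a. (\<lambda>b. [b]) (c a))"
    by (simp add: block_def c_def fun_eq_iff)
  then have "shannon_H nu (block n 0) = shannon_H nu (\<lambda>a. (\<lambda>b. [b]) (c a))" by simp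
  also have "\<dots> = shannon_H nu c" by (rule H_inj) (simp add: inj_on_def)
  also have "\<dots> = - (\<Sum>y\<in>UNIV. measure nu (c -` {y} \<inter> space nu) * ln (measure nu (c -` {y} \<inter> space nu)))"
    by (rule H_superset) auto
  also have "\<dots> = - ((1/2)^(n+1) * ln ((1/2)^(n+1)) + (1 - (1/2)^(n+1)) * ln (1 - (1/2)^(n+1)))"
  proof -
    have eT: "c -` {True} \<inter> space nu = {a. \<forall>j\<le>n. a (int j)}"
      by (auto simp: c_def tau_pow space_nu)
    have eF: "c -` {False} \<inter> space nu = space nu - {a. \<forall>j\<le>n. a (int j)}"
      by (auto simp: c_def tau_pow space_nu)
    have sS: "{a. \<forall>j\<le>n. a (int j)} \<in> sets nu"
      using c_sets[of n 0 True] by (simp add: tau_pow)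
    show ?thesis unfolding UNIV_bool
      by (simp add: eT eF prob_compl[OF sS] meas_S)
  qed
  finally show ?thesis .
qed

lemma ss_aux: "2 powr (real n / 2) * 2 powr (real n / 2) = (2::real) ^ n"
  by (simp add: powr_add[symmetric] powr_realpow)

lemma sq_aux: "(real n + 3)^2 \<le> 36 * 2 ^ n"
proof (induction n)
  case 0 then show ?case by simp
next
  case (Suc n)
  have "(real (Suc n) + 3)^2 \<le> 2 * (real n + 3)^2" by (simp add: power2_eq_square algebra_simps)
  also have "\<dots> \<le> 2 * (36 * 2 ^ n)" using Suc by simp
  finally show ?case by simp
qed

lemma q2_aux: "2 * ((1/2::real)^(n+1)) = 2 powr (- real n)"
proof -
  have "2 * ((1/2::real)^(n+1)) = 1 / 2 ^ n" by (simp add: power_divide)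
  also have "\<dots> = 2 powr (- real n)" by (simp add: powr_minus powr_realpow divide_inverse)
  finally show ?thesis .
qed

lemma n3_aux: "real n + 3 \<le> 6 * 2 powr (real n / 2)"
proof -
  define s where "s = 2 powr (real n / 2)"
  have s0: "0 \<le> s" unfolding s_def by simp
  have ss: "s * s = 2 ^ n" using ss_aux[of n] unfolding s_def .
  have sq6: "(6 * s)^2 = 36 * (s * s)" by (simp add: power2_eq_square)
  have "(real n + 3)^2 \<le> (6 * s)^2" unfolding sq6 ss by (rule sq_aux)
  then have "real n + 3 \<le> 6 * s" by (rule power2_le_imp_le) (use s0 in simp)
  then show ?thesis unfolding s_def .
qed

lemma bound_ineq:
  fixes n :: nat
  shows "- ((1/2)^(n+1) * ln ((1/2)^(n+1)) + (1 - (1/2)^(n+1)) * ln (1 - (1/2)^(n+1)))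
         \<le> 3 * ln 2 * 2 powr (- real n / 2)"
proof -
  define q :: real where "q = (1/2)^(n+1)"
  have "(1/2::real)^n \<le> 1" by (rule power_le_one) auto
  then have q0: "0 < q" and q1: "q < 1" unfolding q_def by auto
  have lnq: "ln q = - ((real n + 1) * ln 2)"
    unfolding q_def by (simp add: ln_realpow ln_div distrib_right)
  have t2: "- ((1 - q) * ln (1 - q)) \<le> q"
  proof -
    have "ln (1 / (1 - q)) \<le> 1 / (1 - q) - 1" using q1 by (intro ln_le_minus_one) simp
    then have "- ln (1 - q) \<le> q / (1 - q)" using q1 by (simp add: ln_div field_simps)
    then have "(1 - q) * (- ln (1 - q)) \<le> (1 - q) * (q / (1 - q))" using q1
      by (intro mult_left_mono) auto
    then show ?thesis using q1 by simp
  qed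
  have l2: "1 \<le> 2 * ln (2::real)" using ln2_ge_two_thirds by simp
  have e: "q * ln q = - (q * ((real n + 1) * ln 2))" by (simp add: lnq)
  have A: "- (q * ln q + (1 - q) * ln (1 - q)) \<le> q * ((real n + 1) * ln 2) + q"
    using t2 e by linarith
  have B: "q * ((real n + 1) * ln 2) + q \<le> q * ((real n + 3) * ln 2)"
  proof -
    have "q * 1 \<le> q * (2 * ln 2)" using q0 l2 by (intro mult_left_mono) auto
    moreover have "q * ((real n + 3) * ln 2) = q * ((real n + 1) * ln 2) + q * (2 * ln 2)"
      by (simp add: distrib_left distrib_right)
    ultimately show ?thesis by simp
  qed
  have C: "q * ((real n + 3) * ln 2) \<le> q * ((6 * 2 powr (real n / 2)) * ln 2)"
    using q0 n3_aux[of n] by (intro mult_left_mono mult_right_mono) auto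
  have D: "q * ((6 * 2 powr (real n / 2)) * ln 2) = 3 * ln 2 * ((2 * q) * 2 powr (real n / 2))"
    by simp
  have E: "(2 * q) * 2 powr (real n / 2) = 2 powr (- real n / 2)"
  proof -
    have "(2 * q) * 2 powr (real n / 2) = 2 powr (- real n) * 2 powr (real n / 2)"
      unfolding q_def q2_aux ..
    also have "\<dots> = 2 powr (- real n + real n / 2)" by (rule powr_add[symmetric])
    also have "- real n + real n / 2 = - real n / 2" by simp
    finally show ?thesis .
  qed
  show ?thesis using A B C unfolding q_def[symmetric] D E by linarith
qed

theorem proposition4p3:
  fixes n :: nat
  shows "\<exists>L. (\<lambda>m. shannon_H nu (block n m) / real m) \<longlonglongrightarrow> L
              \<and> L \<le> 3 * ln 2 * 2 powr (- real n / 2)"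
proof -
  define G where "G k = shannon_H nu (block n (k - 1))" for k
  have sub: "G (a + b) \<le> G a + G b" if "a \<ge> 1" "b \<ge> 1" for a b
  proof -
    define p where "p = a - 1"
    define q where "q = b - 1"
    from that have "a + b - 1 = p + q + 1" "a - 1 = p" "b - 1 = q" by (simp_all add: p_def q_def)
    then show ?thesis unfolding G_def using G_sub[of n p q] by simp
  qed
  have nn: "0 \<le> G k" for k unfolding G_def by (rule H_nonneg[OF prob_nu])
  define L where "L = (INF k\<in>{1..}. G k / real k)"
  have lim: "(\<lambda>k. G k / real k) \<longlonglongrightarrow> L" unfolding L_def by (rule fekete[OF sub nn])
  have bdd: "bdd_below ((\<lambda>k. G k / real k) ` {1..})"
    by (rule bdd_belowI[of _ 0]) (auto simp: nn)
  have "L \<le> G 1 / real 1" unfolding L_def using bdd by (intro cInf_lower imageI) auto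
  also have "\<dots> = shannon_H nu (block n 0)" by (simp add: G_def)
  also have "\<dots> \<le> 3 * ln 2 * 2 powr (- real n / 2)" unfolding G1 by (rule bound_ineq)
  finally have Lb: "L \<le> 3 * ln 2 * 2 powr (- real n / 2)" .
  have conv: "(\<lambda>m. G (Suc m) / real (Suc m) * (real (Suc m) / real m)) \<longlonglongrightarrow> L * 1"
    by (intro tendsto_mult LIMSEQ_Suc[OF lim] LIMSEQ_Suc_n_over_n)
  have eq: "G (Suc m) / real (Suc m) * (real (Suc m) / real m) = shannon_H nu (block n m) / real m" for m
  proof (cases "m = 0")
    case True then show ?thesis by simp
  next
    case False then show ?thesis by (simp add: G_def del: of_nat_Suc)
  qed
  have eqf: "(\<lambda>m. G (Suc m) / real (Suc m) * (real (Suc m) / real m)) = (\<lambda>m. shannon_H nu (block n m) / real m)"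
    by (rule ext) (rule eq)
  have "(\<lambda>m. shannon_H nu (block n m) / real m) \<longlonglongrightarrow> L * 1" using conv unfolding eqf .
  then have "(\<lambda>m. shannon_H nu (block n m) / real m) \<longlonglongrightarrow> L" by simp
  with Lb show ?thesis by blast
qed

end
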